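(* Let $f:\mathbb{R}^d\to\mathbb{R}$ be convex and differentiable with $L$-Lipschitz gradient, with bounded level sets and a minimizer $x^*$. For $x\in\mathbb{R}^d$ let $\phi_x(\lambda)=f(x-\lambda\nabla f(x))$. Let $x_0\in\mathbb{R}^d$ and $x_{k+1}=x_k-\lambda_k\nabla f(x_k)$ with $\lambda_k=\max\{\lambda>0:\ \phi_{x_k}(2\lambda)\le\phi_{x_k}(\lambda)+\tfrac{\lambda}{2}\phi_{x_k}'(0)\}$ (assumed to be attained). Then $\lambda_k\ge 1/(3L)$ for all $k$, and there is a constant $D$ depending only on $x_0$, $x^*$, $L$ such that $f(x_k)-f(x^* )\le D/k$ for all $k\ge1$. (This is the case $h\equiv0$ of the non-accelerated composite scheme, for which $G^{f}_{\lambda h}=\nabla f$.)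
   Context: $\mathbb{R}^d$ carries the standard inner product and Euclidean norm $\|\cdot\|$; $\phi_x'(0)=-\|\nabla f(x)\|^2$ denotes the derivative of $\phi_x$ at $0$. *)

theory Defs
  imports "HOL-Analysis.Analysis"
begin

definition phi :: "('a::real_normed_vector \<Rightarrow> real) \<Rightarrow> ('a \<Rightarrow> 'a) \<Rightarrow> 'a \<Rightarrow> real \<Rightarrow> real" where
  "phi f g x t = f (x - t *\<^sub>R g x)"

text \<open>Admissible step sizes: lambda > 0 with phi_x(2 lambda) <= phi_x(lambda) + lambda/2 phi_x'(0),
  where phi_x'(0) = - norm(grad f x)^2.\<close>
definition step_set :: "('a::real_inner \<Rightarrow> real) \<Rightarrow> ('a \<Rightarrow> 'a) \<Rightarrow> 'a \<Rightarrow> real set" where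
  "step_set f g x = {t. t > 0 \<and>
      phi f g x (2 * t) \<le> phi f g x t + t / 2 * (- (norm (g x))\<^sup>2)}"

definition is_max_step :: "('a::real_inner \<Rightarrow> real) \<Rightarrow> ('a \<Rightarrow> 'a) \<Rightarrow> 'a \<Rightarrow> real \<Rightarrow> bool" where
  "is_max_step f g x t \<longleftrightarrow> t \<in> step_set f g x \<and> (\<forall>\<mu>\<in>step_set f g x. \<mu> \<le> t)"

end

theory Submission
  imports Defs
begin


lemma line_deriv:
  fixes f :: "'a::euclidean_space \<Rightarrow> real"
  assumes "\<forall>y. GDERIV f y :> grad y"
  shows "((\<lambda>s. f (x + s *\<^sub>R v)) has_real_derivative (grad (x + s *\<^sub>R v) \<bullet> v)) (at s within S)"
proof -
  have d1: "((\<lambda>s. x + s *\<^sub>R v) has_derivative (\<lambda>h. h *\<^sub>R v)) (at s within S)"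
    by (auto intro!: derivative_eq_intros)
  have d2: "(f has_derivative (\<lambda>h. h \<bullet> grad (x + s *\<^sub>R v))) (at (x + s *\<^sub>R v))"
    using assms by (simp add: gderiv_def)
  have "((\<lambda>s. f (x + s *\<^sub>R v)) has_derivative (\<lambda>h. (h *\<^sub>R v) \<bullet> grad (x + s *\<^sub>R v))) (at s within S)"
    using has_derivative_compose[OF d1 d2] by (simp add: o_def)
  moreover have "(\<lambda>h. (h *\<^sub>R v) \<bullet> grad (x + s *\<^sub>R v)) = (*) (grad (x + s *\<^sub>R v) \<bullet> v)"
    by (auto simp: fun_eq_iff inner_commute)
  ultimately show ?thesis
    by (simp add: has_field_derivative_def)
qed

lemma line_convex:
  fixes f :: "'a::euclidean_space \<Rightarrow> real"
  assumes "convex_on UNIV f"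
  shows "convex_on UNIV (\<lambda>s::real. f (x + s *\<^sub>R v))"
proof (rule convex_onI)
  fix t :: real and a b :: real assume "0 < t" "t < 1"
  show "f (x + ((1 - t) *\<^sub>R a + t *\<^sub>R b) *\<^sub>R v) \<le> (1 - t) * f (x + a *\<^sub>R v) + t * f (x + b *\<^sub>R v)"
  proof -
  have "x + ((1 - t) * a + t * b) *\<^sub>R v = (1 - t) *\<^sub>R (x + a *\<^sub>R v) + t *\<^sub>R (x + b *\<^sub>R v)"
    by (simp add: algebra_simps)
  moreover have "f ((1 - t) *\<^sub>R (x + a *\<^sub>R v) + t *\<^sub>R (x + b *\<^sub>R v)) \<le> (1 - t) * f (x + a *\<^sub>R v) + t * f (x + b *\<^sub>R v)"
    using assms \<open>0<t\<close> \<open>t<1\<close> by (intro convex_onD) auto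
  ultimately show ?thesis by simp
  qed
qed auto

lemma grad_ineq:
  fixes f :: "'a::euclidean_space \<Rightarrow> real"
  assumes "convex_on UNIV f" "\<forall>y. GDERIV f y :> grad y"
  shows "f z - f x \<ge> grad x \<bullet> (z - x)"
proof -
  have "(\<lambda>s. f (x + s *\<^sub>R (z - x))) 1 - (\<lambda>s. f (x + s *\<^sub>R (z - x))) 0 \<ge> (grad (x + 0 *\<^sub>R (z-x)) \<bullet> (z - x)) * (1 - 0)"
    by (rule convex_on_imp_above_tangent[OF line_convex[OF assms(1)]]) (auto intro: line_deriv[OF assms(2), where s=0, simplified])
  then show ?thesis by simp
qed


lemma psi_mono:
  fixes f :: "'a::euclidean_space \<Rightarrow> real"
  assumes fd: "\<forall>y. GDERIV f y :> grad y"
    and lip: "\<forall>y z. norm (grad y - grad z) \<le> L * norm (y - z)"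
    and t: "0 \<le> t"
  shows "f (x - (2*t) *\<^sub>R grad x) \<le> f (x - t *\<^sub>R grad x) - t * (norm (grad x))\<^sup>2 + 3/2 * L * t\<^sup>2 * (norm (grad x))\<^sup>2"
proof -
  define g where "g = grad x"
  define \<psi> where "\<psi> = (\<lambda>s. f (x + s *\<^sub>R (-g)) + s * (norm g)\<^sup>2 - L * (norm g)\<^sup>2 * s\<^sup>2 / 2)"
  have "\<psi> t \<ge> \<psi> (2*t)"
  proof (rule DERIV_nonpos_imp_nonincreasing[of t "2*t"])
    show "t \<le> 2*t" using t by simp
    fix s assume s: "t \<le> s" "s \<le> 2*t"
    let ?y = "x + s *\<^sub>R (-g)"
    have "(\<psi> has_real_derivative (grad ?y \<bullet> (-g) + (norm g)\<^sup>2 - L * (norm g)\<^sup>2 * s)) (at s)"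
    proof -
      have d: "((\<lambda>s. f (x + s *\<^sub>R (-g))) has_real_derivative (grad ?y \<bullet> (-g))) (at s)"
        by (rule line_deriv[OF fd])
      show ?thesis unfolding \<psi>_def
        apply (rule derivative_eq_intros d refl)+
          apply simp
         apply (rule refl)
        apply (simp add: power2_eq_square algebra_simps)
        done
    qed
    moreover have "grad ?y \<bullet> (-g) + (norm g)\<^sup>2 - L * (norm g)\<^sup>2 * s \<le> 0"
    proof -
      have "grad ?y \<bullet> (-g) + (norm g)\<^sup>2 = (g - grad ?y) \<bullet> g"
        by (simp add: inner_diff_left power2_norm_eq_inner)
      also have "\<dots> \<le> norm (g - grad ?y) * norm g" by (rule norm_cauchy_schwarz)
      also have "norm (g - grad ?y) \<le> L * norm (x - ?y)" using lip unfolding g_def by blast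
      hence "norm (g - grad ?y) * norm g \<le> L * norm (x - ?y) * norm g" by (simp add: mult_right_mono)
      also have "norm (x - ?y) = s * norm g" using s t by simp
      finally show ?thesis by (simp add: power2_eq_square algebra_simps)
    qed
    ultimately show "\<exists>y. (\<psi> has_real_derivative y) (at s) \<and> y \<le> 0" by blast
  qed
  then show ?thesis unfolding \<psi>_def g_def
    by (simp add: power2_eq_square algebra_simps)
qed


lemma lin3: "(h::real) = (A + B - C)/2 \<Longrightarrow> B = q \<Longrightarrow> h = r \<Longrightarrow> C = A - 2*r + q" by (simp add: field_simps)

lemma norm_sq_aux: "(norm (a - l *\<^sub>R g))\<^sup>2 = (norm a)\<^sup>2 - 2*l*(g \<bullet> a) + l\<^sup>2 * (norm g)\<^sup>2"
proof -
  have h: "a \<bullet> (l *\<^sub>R g) = ((norm a)\<^sup>2 + (norm (l *\<^sub>R g))\<^sup>2 - (norm (a - l *\<^sub>R g))\<^sup>2) / 2"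
    by (rule dot_norm_neg)
  have "(norm (l *\<^sub>R g))\<^sup>2 = l\<^sup>2 * (norm g)\<^sup>2" by (simp add: power_mult_distrib)
  moreover have "a \<bullet> (l *\<^sub>R g) = l * (g \<bullet> a)" by (simp add: inner_commute)
  moreover have e2: "2*l*(g \<bullet> a) = 2*(l*(g \<bullet> a))" by simp
  ultimately show ?thesis unfolding e2 by (intro lin3[OF h])
qed

lemma aux_ineq: "(a::real) \<le> b - t*n + c \<Longrightarrow> c = t/2*n \<Longrightarrow> a \<le> b + t/2 * - n"
  by (simp add: field_simps)

lemma main_part:
  fixes f :: "'a::euclidean_space \<Rightarrow> real"
  assumes cv: "convex_on UNIV f"
    and fd: "\<forall>y. GDERIV f y :> grad y"
    and lip: "\<forall>y z. norm (grad y - grad z) \<le> L * norm (y - z)"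
    and mn: "\<forall>y. f xs \<le> f y"
    and x0: "x 0 = x0"
    and ms: "\<forall>k. is_max_step f grad (x k) (lam k)"
    and it: "\<forall>k. x (Suc k) = x k - lam k *\<^sub>R grad (x k)"
  shows "(\<forall>k. lam k \<ge> 1 / (3 * L)) \<and>
          (\<forall>k\<ge>1. f (x k) - f xs \<le> (3 * L / 2 * (norm (x0 - xs))\<^sup>2) / real k)"
proof -
  have lampos: "lam k > 0" and stp: "f (x k - (2 * lam k) *\<^sub>R grad (x k)) \<le> f (x k - lam k *\<^sub>R grad (x k)) + lam k / 2 * (- (norm (grad (x k)))\<^sup>2)"
    and mx: "\<And>\<mu>. \<mu> \<in> step_set f grad (x k) \<Longrightarrow> \<mu> \<le> lam k" for k
    using ms unfolding is_max_step_def step_set_def phi_def by auto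
  have gnz: "grad (x k) \<noteq> 0" for k
  proof
    assume "grad (x k) = 0"
    then have "lam k + 1 \<in> step_set f grad (x k)"
      using lampos[of k] unfolding step_set_def phi_def by auto
    from mx[OF this] show False by simp
  qed
  have gi: "grad y \<bullet> (z - y) \<le> f z - f y" for y z by (rule grad_ineq[OF cv fd])
  have Lpos: "L > 0"
  proof (rule ccontr)
    assume "\<not> L > 0"
    then have "grad y = grad z" for y z using lip[rule_format, of y z]
      by (smt (verit) mult_nonpos_nonneg norm_ge_zero norm_le_zero_iff right_minus_eq)
    then have c: "grad y = grad xs" for y by blast
    have "grad xs \<bullet> ((xs - grad xs) - xs) \<le> f (xs - grad xs) - f xs"
      using gi by blast
    moreover have "grad (xs - grad xs) \<bullet> (xs - (xs - grad xs)) \<le> f xs - f (xs - grad xs)"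
      using gi by blast
    ultimately have "grad xs \<bullet> grad xs \<le> 0" using c[of "xs - grad xs"] mn[rule_format, of "xs - grad xs"] by (simp add: inner_diff_right)
    then have "grad xs = 0" by (metis inner_ge_zero inner_eq_zero_iff order_antisym)
    with gnz[of 0] c show False by metis
  qed
  have lamlb: "lam k \<ge> 1 / (3 * L)" for k
  proof -
    define t where "t = 1 / (3 * L)"
    have tpos: "t > 0" using Lpos by (simp add: t_def)
    have "f (x k - (2*t) *\<^sub>R grad (x k)) \<le> f (x k - t *\<^sub>R grad (x k)) - t * (norm (grad (x k)))\<^sup>2 + 3/2 * L * t\<^sup>2 * (norm (grad (x k)))\<^sup>2"
      by (rule psi_mono[OF fd lip]) (use tpos in simp)
    moreover have "3/2 * L * t\<^sup>2 = t / 2" using Lpos by (simp add: t_def power2_eq_square field_simps)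
    then have "3/2 * L * t\<^sup>2 * (norm (grad (x k)))\<^sup>2 = t / 2 * (norm (grad (x k)))\<^sup>2" by simp
    ultimately have "f (x k - (2*t) *\<^sub>R grad (x k)) \<le> f (x k - t *\<^sub>R grad (x k)) + t / 2 * (- (norm (grad (x k)))\<^sup>2)"
      by (rule aux_ineq)
    then have "t \<in> step_set f grad (x k)"
      using tpos unfolding step_set_def phi_def by (simp add: algebra_simps)
    then show ?thesis using mx t_def by blast
  qed
  define e where "e k = f (x k) - f xs" for k
  define d where "d k = (norm (x k - xs))\<^sup>2" for k
  have epos: "e k \<ge> 0" for k using mn by (simp add: e_def)
  have desc: "f (x (Suc k)) \<le> f (x k) - lam k / 2 * (norm (grad (x k)))\<^sup>2" for k
  proof -
    let ?g = "grad (x k)" and ?l = "lam k"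
    have "x k - ?l *\<^sub>R ?g = (1 - 1/2) *\<^sub>R x k + (1/2::real) *\<^sub>R (x k - (2 * ?l) *\<^sub>R ?g)"
      by (simp add: algebra_simps flip: scaleR_add_left)
    then have "f (x k - ?l *\<^sub>R ?g) \<le> (1 - 1/2) * f (x k) + 1/2 * f (x k - (2 * ?l) *\<^sub>R ?g)"
      using convex_onD[OF cv, of "1/2" "x k" "x k - (2 * ?l) *\<^sub>R ?g"] by simp
    then show ?thesis using stp[of k] it by simp
  qed
  have emono: "e (Suc k) \<le> e k" for k
  proof -
    have "lam k * (norm (grad (x k)))\<^sup>2 / 2 \<ge> 0" using lampos[of k] by simp
    then show ?thesis using desc[of k] by (simp add: e_def)
  qed
  have key: "2 * lam k * e (Suc k) \<le> d k - d (Suc k)" for k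
  proof -
    let ?g = "grad (x k)" and ?l = "lam k"
    have "?g \<bullet> (xs - x k) \<le> f xs - f (x k)" by (rule gi)
    then have "e k \<le> ?g \<bullet> (x k - xs)" by (simp add: e_def inner_diff_right)
    then have "e (Suc k) \<le> ?g \<bullet> (x k - xs) - ?l / 2 * (norm ?g)\<^sup>2"
      using desc[of k] by (simp add: e_def)
    moreover have "d (Suc k) = d k - 2 * ?l * (?g \<bullet> (x k - xs)) + ?l\<^sup>2 * (norm ?g)\<^sup>2"
    proof -
      have e1: "x (Suc k) - xs = (x k - xs) - ?l *\<^sub>R ?g" using it by simp
      show ?thesis unfolding d_def e1 by (rule norm_sq_aux)
    qed
    ultimately show ?thesis
    proof -
      assume h1: "e (Suc k) \<le> ?g \<bullet> (x k - xs) - ?l / 2 * (norm ?g)\<^sup>2"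
        and h2: "d (Suc k) = d k - 2 * ?l * (?g \<bullet> (x k - xs)) + ?l\<^sup>2 * (norm ?g)\<^sup>2"
      have "2 * ?l * e (Suc k) \<le> 2 * ?l * (?g \<bullet> (x k - xs) - ?l / 2 * (norm ?g)\<^sup>2)"
        using h1 lampos[of k] by (intro mult_left_mono) auto
      also have "\<dots> = 2 * ?l * (?g \<bullet> (x k - xs)) - ?l\<^sup>2 * (norm ?g)\<^sup>2"
        by (simp add: algebra_simps power2_eq_square)
      finally show ?thesis using h2 by linarith
    qed
  qed
  have key2: "2 / (3 * L) * e (Suc k) \<le> d k - d (Suc k)" for k
  proof -
    have "2 / (3 * L) * e (Suc k) \<le> 2 * lam k * e (Suc k)"
      using lamlb[of k] epos[of "Suc k"] by (intro mult_right_mono) (auto simp: field_simps)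
    then show ?thesis using key[of k] by linarith
  qed
  have ind: "2 / (3 * L) * real n * e n + d n \<le> d 0" for n
  proof (induction n)
    case 0 then show ?case by simp
  next
    case (Suc n)
    have "2 / (3 * L) * real (Suc n) * e (Suc n) = 2 / (3 * L) * real n * e (Suc n) + 2 / (3 * L) * e (Suc n)"
      by (simp add: algebra_simps add_divide_distrib)
    also have "2 / (3 * L) * real n * e (Suc n) \<le> 2 / (3 * L) * real n * e n"
      using emono[of n] Lpos by (intro mult_left_mono) auto
    finally show ?case using Suc key2[of n] by linarith
  qed
  have rate: "f (x k) - f xs \<le> (3 * L / 2 * (norm (x0 - xs))\<^sup>2) / real k" if "k \<ge> 1" for k
  proof -
    have "2 / (3 * L) * real k * e k \<le> d 0" using ind[of k] d_def by (smt (verit) zero_le_power2)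
    then have "real k * e k \<le> 3 * L / 2 * d 0" using Lpos by (simp add: field_simps)
    then show ?thesis using that unfolding e_def d_def x0 by (simp add: field_simps mult.commute)
  qed
  show ?thesis using lamlb rate by blast
qed

theorem corollary2p4:
  "\<exists>D :: 'a::euclidean_space \<Rightarrow> 'a \<Rightarrow> real \<Rightarrow> real.
    \<forall>(f :: 'a \<Rightarrow> real) (grad :: 'a \<Rightarrow> 'a) (L :: real) (xs :: 'a) (x0 :: 'a)
      (x :: nat \<Rightarrow> 'a) (lam :: nat \<Rightarrow> real).
      convex_on UNIV f \<and>
      (\<forall>y. GDERIV f y :> grad y) \<and>
      (\<forall>y z. norm (grad y - grad z) \<le> L * norm (y - z)) \<and>
      (\<forall>c. bounded {y. f y \<le> c}) \<and>
      (\<forall>y. f xs \<le> f y) \<and>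
      x 0 = x0 \<and>
      (\<forall>k. is_max_step f grad (x k) (lam k)) \<and>
      (\<forall>k. x (Suc k) = x k - lam k *\<^sub>R grad (x k))
      \<longrightarrow> (\<forall>k. lam k \<ge> 1 / (3 * L)) \<and>
          (\<forall>k\<ge>1. f (x k) - f xs \<le> D x0 xs L / real k)"
  apply (rule exI[of _ "\<lambda>x0 xs L. 3 * L / 2 * (norm (x0 - xs))\<^sup>2"])
  apply (intro allI impI)
  apply (elim conjE)
  apply (rule main_part)
  apply assumption+
  done

end
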